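(* $z^\star_{\omega,\tau}(t)\ge\frac{\tau}{L_\omega}\mathbf{1}$ (componentwise) for almost every $t\in\Omega$.
   Context: Let $\Omega=(t_0,t_E)$ bounded, $t_1,\dots,t_M\in[t_0,t_E]$; $\mathcal{X}=(H^1(\Omega))^{n_y}\times(L^2(\Omega))^{n_z}$, $x=(y,z)$. For $f:\mathbb{R}^{n_y}\times\mathbb{R}^{n_y}\times\mathbb{R}^{n_z}\times\Omega\to\mathbb{R}$, $c$ (values in $\mathbb{R}^{n_c}$), $b:(\mathbb{R}^{n_y})^M\to\mathbb{R}^{n_b}$: $F(x)=\int_\Omega f(\dot y,y,z,t)dt$, $r(x)=\int_\Omega\|c(\dot y,y,z,t)\|_2^2dt+\|b(y(t_1),\dots,y(t_M))\|_2^2$, $\Gamma(x)=-\sum_{j=1}^{n_z}\int_\Omega\log z_j(t)dt$. For $\omega\in(0,1)$, $\tau\in(0,\omega]$: $F_{\omega,\tau}=F+\frac1{2\omega}r+\tau\Gamma$, and $x^\star_{\omega,\tau}=(y^\star_{\omega,\tau},z^\star_{\omega,\tau})$ is a minimizer of $F_{\omega,\tau}$ over $\mathcal{X}$. Assumptions: (A.2) $\|c(\dot y(t),y(t),z(t),t)\|_1$ and $\|b(\dots)\|_1$ bounded for all $x$ with $z\ge0$, $t\in\Omega$; $F$ bounded below on $\{z\ge0\}$. (A.3) $f,c,b$ globally Lipschitz in all arguments except $t$. $L_F,L_r\ge2$ bound the Lipschitz constants of $F,r$ (w.r.t. $\|x\|_{\mathcal{X}}$ and $\|z\|_{L^1(\Omega)}$),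 $L_f,L_c$ are the Lipschitz constants of $f,c$, $|c|_{max}$ bounds $\|c\|_1$, and $L_\omega=\max\{L_F+\frac{L_r}{2\omega},L_f+\frac{L_c}{2\omega}|c|_{max}\}$. *)

theory Defs
  imports "HOL-Analysis.Analysis"
begin

definition Om :: "real \<Rightarrow> real \<Rightarrow> real set" where
  "Om t0 tE = {t0<..<tE}"

definition L2fun :: "real \<Rightarrow> real \<Rightarrow> (real \<Rightarrow> 'a::euclidean_space) \<Rightarrow> bool" where
  "L2fun t0 tE g \<longleftrightarrow> g \<in> borel_measurable (lebesgue_on (Om t0 tE))
      \<and> integrable (lebesgue_on (Om t0 tE)) (\<lambda>t. (norm (g t))^2)"

text \<open>H1 functions on a bounded interval, represented by their (absolutely) continuous
  representative on the closed interval: y is the indefinite integral of an L2 function.\<close>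
definition H1fun :: "real \<Rightarrow> real \<Rightarrow> (real \<Rightarrow> 'a::euclidean_space) \<Rightarrow> bool" where
  "H1fun t0 tE y \<longleftrightarrow> (\<exists>v. L2fun t0 tE v \<and>
      (\<forall>t\<in>{t0..tE}. y t = y t0 + (LINT s:{t0..t}|lborel. v s)))"

definition Xspace :: "real \<Rightarrow> real \<Rightarrow>
    ((real \<Rightarrow> real^'ny) \<times> (real \<Rightarrow> real^'nz)) set" where
  "Xspace t0 tE = {(y, z). H1fun t0 tE y \<and> L2fun t0 tE z}"

text \<open>Derivative of y (coincides a.e. with the weak derivative for H1 functions).\<close>
definition dy :: "(real \<Rightarrow> 'a::real_normed_vector) \<Rightarrow> real \<Rightarrow> 'a" where
  "dy y t = vector_derivative y (at t)"

definition norm1 :: "real^'n \<Rightarrow> real" where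
  "norm1 v = (\<Sum>i\<in>UNIV. \<bar>v $ i\<bar>)"

definition Xnorm :: "real \<Rightarrow> real \<Rightarrow> (real \<Rightarrow> real^'ny) \<Rightarrow> (real \<Rightarrow> real^'nz) \<Rightarrow> real" where
  "Xnorm t0 tE y z = sqrt (\<integral>t. (norm (y t))^2 + (norm (dy y t))^2 + (norm (z t))^2
                              \<partial>lebesgue_on (Om t0 tE))"

definition L1norm :: "real \<Rightarrow> real \<Rightarrow> (real \<Rightarrow> real^'nz) \<Rightarrow> real" where
  "L1norm t0 tE z = (\<integral>t. norm1 (z t) \<partial>lebesgue_on (Om t0 tE))"

definition znonneg :: "real \<Rightarrow> real \<Rightarrow> (real \<Rightarrow> real^'nz) \<Rightarrow> bool" where
  "znonneg t0 tE z \<longleftrightarrow> (AE t in lebesgue_on (Om t0 tE). \<forall>j. 0 \<le> z t $ j)"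

definition Fobj :: "(real^'ny \<Rightarrow> real^'ny \<Rightarrow> real^'nz \<Rightarrow> real \<Rightarrow> real) \<Rightarrow> real \<Rightarrow> real \<Rightarrow>
    (real \<Rightarrow> real^'ny) \<Rightarrow> (real \<Rightarrow> real^'nz) \<Rightarrow> real" where
  "Fobj f t0 tE y z = (\<integral>t. f (dy y t) (y t) (z t) t \<partial>lebesgue_on (Om t0 tE))"

definition robj :: "(real^'ny \<Rightarrow> real^'ny \<Rightarrow> real^'nz \<Rightarrow> real \<Rightarrow> real^'nc) \<Rightarrow>
    (real^'ny^'m \<Rightarrow> real^'nb) \<Rightarrow> ('m \<Rightarrow> real) \<Rightarrow> real \<Rightarrow> real \<Rightarrow>
    (real \<Rightarrow> real^'ny) \<Rightarrow> (real \<Rightarrow> real^'nz) \<Rightarrow> real" where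
  "robj c b ts t0 tE y z =
     (\<integral>t. (norm (c (dy y t) (y t) (z t) t))^2 \<partial>lebesgue_on (Om t0 tE))
     + (norm (b (\<chi> k. y (ts k))))^2"

definition neglog :: "real \<Rightarrow> ennreal" where
  "neglog s = (if 0 < s then ennreal (max 0 (- ln s)) else \<infinity>)"

definition poslog :: "real \<Rightarrow> ennreal" where
  "poslog s = (if 0 < s then ennreal (max 0 (ln s)) else 0)"

text \<open>Log barrier Gamma(x) = - sum_j integral log z_j, with value +infinity when some z_j
  is not a.e. positive or -log z_j is not integrable.\<close>
definition Gamma :: "real \<Rightarrow> real \<Rightarrow> (real \<Rightarrow> real^'nz) \<Rightarrow> ereal" where
  "Gamma t0 tE z = (\<Sum>j\<in>UNIV.
      enn2ereal (\<integral>\<^sup>+ t. neglog (z t $ j) \<partial>lebesgue_on (Om t0 tE))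
    - enn2ereal (\<integral>\<^sup>+ t. poslog (z t $ j) \<partial>lebesgue_on (Om t0 tE)))"

definition Fwt :: "(real^'ny \<Rightarrow> real^'ny \<Rightarrow> real^'nz \<Rightarrow> real \<Rightarrow> real) \<Rightarrow>
    (real^'ny \<Rightarrow> real^'ny \<Rightarrow> real^'nz \<Rightarrow> real \<Rightarrow> real^'nc) \<Rightarrow>
    (real^'ny^'m \<Rightarrow> real^'nb) \<Rightarrow> ('m \<Rightarrow> real) \<Rightarrow> real \<Rightarrow> real \<Rightarrow> real \<Rightarrow> real \<Rightarrow>
    (real \<Rightarrow> real^'ny) \<Rightarrow> (real \<Rightarrow> real^'nz) \<Rightarrow> ereal" where
  "Fwt f c b ts t0 tE \<omega> \<tau> y z =
     ereal (Fobj f t0 tE y z + robj c b ts t0 tE y z / (2 * \<omega>)) + ereal \<tau> * Gamma t0 tE z"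

end

theory Submission
  imports Defs
begin

lemma neglog_meas[measurable]: "neglog \<in> borel_measurable borel"
  unfolding neglog_def by measurable
lemma poslog_meas[measurable]: "poslog \<in> borel_measurable borel"
  unfolding poslog_def by measurable

lemma split_integral_ereal:
  fixes h :: "'a \<Rightarrow> real"
  assumes "integrable M h"
  shows "enn2ereal (\<integral>\<^sup>+x. ennreal (h x) \<partial>M) - enn2ereal (\<integral>\<^sup>+x. ennreal (- h x) \<partial>M)
     = ereal (integral\<^sup>L M h)"
proof -
  have m: "h \<in> borel_measurable M" using assms by auto
  have fin: "(\<integral>\<^sup>+x. ennreal (norm (h x)) \<partial>M) < \<infinity>" using assms integrable_iff_bounded by blast
  have a: "(\<integral>\<^sup>+x. ennreal (h x) \<partial>M) < \<infinity>"
    by (rule le_less_trans[OF _ fin], rule nn_integral_mono) auto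
  have b: "(\<integral>\<^sup>+x. ennreal (- h x) \<partial>M) < \<infinity>"
    by (rule le_less_trans[OF _ fin], rule nn_integral_mono) auto
  obtain A where A: "(\<integral>\<^sup>+x. ennreal (h x) \<partial>M) = ennreal A" "0 \<le> A"
    using a less_top_ennreal by auto
  obtain B where B: "(\<integral>\<^sup>+x. ennreal (- h x) \<partial>M) = ennreal B" "0 \<le> B"
    using b less_top_ennreal by auto
  show ?thesis
    using real_lebesgue_integral_def[OF assms] A B by simp
qed

lemma integrable_from_parts:
  fixes h :: "'a \<Rightarrow> real"
  assumes m: "h \<in> borel_measurable M" and a: "(\<integral>\<^sup>+x. ennreal (h x) \<partial>M) < \<infinity>"
    and b: "(\<integral>\<^sup>+x. ennreal (- h x) \<partial>M) < \<infinity>"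
  shows "integrable M h"
proof -
  have "(\<integral>\<^sup>+x. ennreal (norm (h x)) \<partial>M) = (\<integral>\<^sup>+x. ennreal (h x) + ennreal (- h x) \<partial>M)"
    by (rule nn_integral_cong, case_tac "h x \<ge> 0") (auto simp: ennreal_neg)
  also have "\<dots> = (\<integral>\<^sup>+x. ennreal (h x) \<partial>M) + (\<integral>\<^sup>+x. ennreal (- h x) \<partial>M)"
    by (rule nn_integral_add) (use m in auto)
  also have "\<dots> < \<infinity>" using a b by (simp add: ennreal_add_less_top)
  finally show ?thesis using m integrable_iff_bounded by blast
qed

lemma neglog_pos: "0 < s \<Longrightarrow> neglog s = ennreal (- ln s)"
  by (auto simp: neglog_def max_def ennreal_neg)
lemma poslog_pos: "0 < s \<Longrightarrow> poslog s = ennreal (ln s)"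
  by (auto simp: poslog_def max_def ennreal_neg)

lemma gamma_comp_eq:
  fixes g :: "'a \<Rightarrow> real"
  assumes pos: "AE x in M. 0 < g x" and int: "integrable M (\<lambda>x. ln (g x))"
  shows "enn2ereal (\<integral>\<^sup>+x. neglog (g x) \<partial>M) - enn2ereal (\<integral>\<^sup>+x. poslog (g x) \<partial>M)
     = ereal (- integral\<^sup>L M (\<lambda>x. ln (g x)))"
proof -
  have 1: "(\<integral>\<^sup>+x. neglog (g x) \<partial>M) = (\<integral>\<^sup>+x. ennreal (- ln (g x)) \<partial>M)"
    by (rule nn_integral_cong_AE) (use pos in \<open>auto simp: neglog_pos\<close>)
  have 2: "(\<integral>\<^sup>+x. poslog (g x) \<partial>M) = (\<integral>\<^sup>+x. ennreal (- (- ln (g x))) \<partial>M)"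
    by (rule nn_integral_cong_AE) (use pos in \<open>auto simp: poslog_pos\<close>)
  have "integrable M (\<lambda>x. - ln (g x))" using int by auto
  from split_integral_ereal[OF this] show ?thesis unfolding 1 2 by simp
qed

lemma gamma_comp_fin:
  fixes g :: "'a \<Rightarrow> real"
  assumes m: "g \<in> borel_measurable M"
    and n: "(\<integral>\<^sup>+x. neglog (g x) \<partial>M) \<noteq> \<infinity>" and p: "(\<integral>\<^sup>+x. poslog (g x) \<partial>M) < \<infinity>"
  shows "AE x in M. 0 < g x" "integrable M (\<lambda>x. ln (g x))"
proof -
  have "AE x in M. neglog (g x) \<noteq> \<infinity>"
    by (rule nn_integral_PInf_AE) (use m n in auto)
  then show pos: "AE x in M. 0 < g x"
    by eventually_elim (auto simp: neglog_def split: if_splits)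
  have 1: "(\<integral>\<^sup>+x. neglog (g x) \<partial>M) = (\<integral>\<^sup>+x. ennreal (- ln (g x)) \<partial>M)"
    by (rule nn_integral_cong_AE) (use pos in \<open>auto simp: neglog_pos\<close>)
  have 2: "(\<integral>\<^sup>+x. poslog (g x) \<partial>M) = (\<integral>\<^sup>+x. ennreal (ln (g x)) \<partial>M)"
    by (rule nn_integral_cong_AE) (use pos in \<open>auto simp: poslog_pos\<close>)
  show "integrable M (\<lambda>x. ln (g x))"
    by (rule integrable_from_parts) (use m n p 1 2 in \<open>auto simp: less_top\<close>)
qed

lemma fin_M: "finite_measure (lebesgue_on (Om t0 tE))"
  unfolding Om_def by (rule finite_measure_lebesgue_on, rule lmeasurable_open) auto

lemma L2_comp_meas: "L2fun t0 tE (z :: real \<Rightarrow> real^'n) \<Longrightarrow>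
    (\<lambda>t. z t $ j) \<in> borel_measurable (lebesgue_on (Om t0 tE))"
  unfolding L2fun_def by (auto intro: measurable_compose[OF _ borel_measurable_nth])

lemma L2_comp_sq_le: "(v $ j)^2 \<le> (norm (v :: real^'n))^2"
  using power_mono[OF component_le_norm_cart[of v j], of 2] by simp

lemma poslog_fin:
  assumes "L2fun t0 tE (z :: real \<Rightarrow> real^'n)"
  shows "(\<integral>\<^sup>+t. poslog (z t $ j) \<partial>lebesgue_on (Om t0 tE)) < \<infinity>"
proof -
  let ?M = "lebesgue_on (Om t0 tE)"
  have int: "integrable ?M (\<lambda>t. (norm (z t))^2)" using assms unfolding L2fun_def by auto
  have "(\<integral>\<^sup>+t. poslog (z t $ j) \<partial>?M) \<le> (\<integral>\<^sup>+t. ennreal ((norm (z t))^2) \<partial>?M)"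
  proof (rule nn_integral_mono)
    fix t
    show "poslog (z t $ j) \<le> ennreal ((norm (z t))^2)"
    proof (cases "0 < z t $ j")
      case True
      have "ln (z t $ j) \<le> z t $ j - 1" using ln_le_minus_one[OF True] .
      also have "\<dots> \<le> (z t $ j)^2" by (simp add: power2_eq_square) (smt (verit) mult_le_cancel_left1 mult_nonneg_nonneg)
      also have "\<dots> \<le> (norm (z t))^2" by (rule L2_comp_sq_le)
      finally show ?thesis using True by (auto simp: poslog_def intro!: ennreal_leI)
    qed (auto simp: poslog_def)
  qed
  also have "\<dots> = ennreal (\<integral>t. (norm (z t))^2 \<partial>?M)"
    by (rule nn_integral_eq_integral[OF int]) auto
  also have "\<dots> < \<infinity>" by simp
  finally show ?thesis .
qed

lemma max_sq_le: "0 \<le> (d::real) \<Longrightarrow> (max a d)^2 \<le> a^2 + d^2"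
  by (cases "a \<le> d") (auto simp: max_def)

lemma norm_sq_cart: "(norm (v :: real^'n))^2 = (\<Sum>j\<in>UNIV. (v $ j)^2)"
  unfolding power2_norm_eq_inner inner_vec_def by (simp add: power2_eq_square)

lemma L2_floor:
  assumes "L2fun t0 tE (z :: real \<Rightarrow> real^'n)" "0 \<le> d"
  shows "L2fun t0 tE (\<lambda>t. \<chi> j. max (z t $ j) d)"
proof -
  let ?M = "lebesgue_on (Om t0 tE)"
  interpret finite_measure ?M by (rule fin_M)
  have zm: "z \<in> borel_measurable ?M" and int: "integrable ?M (\<lambda>t. (norm (z t))^2)"
    using assms unfolding L2fun_def by auto
  have c: "continuous_on UNIV (\<lambda>v::real^'n. \<chi> j. max (v $ j) d)"
    by (intro continuous_intros)
  have m: "(\<lambda>t. \<chi> j. max (z t $ j) d) \<in> borel_measurable ?M"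
    by (rule measurable_compose[OF zm borel_measurable_continuous_onI[OF c]])
  have m2: "(\<lambda>t. (norm (\<chi> j. max (z t $ j) d))^2) \<in> borel_measurable ?M"
    using m by measurable
  have i2: "integrable ?M (\<lambda>t. (norm (z t))^2 + real CARD('n) * d^2)"
    using int by simp
  have b: "norm ((norm (\<chi> j. max (z t $ j) d))^2) \<le> norm ((norm (z t))^2 + real CARD('n) * d^2)" for t
  proof -
    have "norm ((norm (\<chi> j. max (z t $ j) d))^2) = (\<Sum>j\<in>UNIV. (max (z t $ j) d)^2)"
      by (simp only: norm_sq_cart real_norm_def vec_lambda_beta abs_power2)
         (rule abs_of_nonneg, rule sum_nonneg, simp)
    also have "\<dots> \<le> (\<Sum>j\<in>UNIV. (z t $ j)^2 + d^2)"
      by (rule sum_mono) (rule max_sq_le[OF assms(2)])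
    also have "\<dots> = (norm (z t))^2 + real CARD('n) * d^2"
      by (simp only: norm_sq_cart sum.distrib sum_constant card_UNIV)
    also have "\<dots> = norm ((norm (z t))^2 + real CARD('n) * d^2)"
      by simp
    finally show ?thesis .
  qed
  have "integrable ?M (\<lambda>t. (norm (\<chi> j. max (z t $ j) d))^2)"
    by (rule Bochner_Integration.integrable_bound[OF i2 m2]) (use b in simp)
  with m show ?thesis unfolding L2fun_def by auto
qed

lemma e_nonneg:
  fixes z d :: real assumes "0 < z" "0 < d"
  shows "0 \<le> ln (max z d) - ln z - max 0 (d - z) / d"
proof (cases "d \<le> z")
  case False
  define x where "x = z / d"
  have x: "0 < x" using assms by (simp add: x_def)
  have "ln x \<le> x - 1" by (rule ln_le_minus_one[OF x])
  moreover have "ln x = ln z - ln d" using assms by (simp add: x_def ln_div)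
  moreover have "x - 1 = - ((d - z) / d)" using assms by (simp add: x_def field_simps)
  ultimately show ?thesis using False by (simp add: max_def)
qed (simp add: max_def)

lemma e_zero:
  fixes z d :: real assumes "0 < z" "0 < d" "ln (max z d) - ln z - max 0 (d - z) / d = 0"
  shows "d \<le> z"
proof (rule ccontr)
  assume False: "\<not> d \<le> z"
  define x where "x = z / d"
  have x: "0 < x" using assms by (simp add: x_def)
  have "ln x = ln z - ln d" using assms by (simp add: x_def ln_div)
  moreover have "x - 1 = - ((d - z) / d)" using assms by (simp add: x_def field_simps)
  ultimately have "ln x = x - 1" using False assms(3) by (simp add: max_def)
  then have "x = 1" using ln_eq_minus_one[OF x] by simp
  then show False using False assms by (simp add: x_def)
qed

lemma abs_le_1_sq: "\<bar>x::real\<bar> \<le> 1 + x^2"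
proof -
  have "0 \<le> (\<bar>x\<bar> - 1)^2" by simp
  moreover have "(\<bar>x\<bar> - 1)^2 = x^2 - 2 * \<bar>x\<bar> + 1"
    by (simp add: power2_eq_square algebra_simps)
  moreover have "0 \<le> x^2" by simp
  ultimately show ?thesis by linarith
qed

lemma L2_abs_int:
  assumes "L2fun t0 tE (z :: real \<Rightarrow> real^'n)"
  shows "integrable (lebesgue_on (Om t0 tE)) (\<lambda>t. \<bar>z t $ j\<bar>)"
proof -
  let ?M = "lebesgue_on (Om t0 tE)"
  interpret finite_measure ?M by (rule fin_M)
  have int: "integrable ?M (\<lambda>t. (norm (z t))^2)" using assms unfolding L2fun_def by auto
  have i2: "integrable ?M (\<lambda>t. 1 + (norm (z t))^2)" using int by simp
  have m: "(\<lambda>t. \<bar>z t $ j\<bar>) \<in> borel_measurable ?M" using L2_comp_meas[OF assms] by measurable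
  have b: "norm (\<bar>z t $ j\<bar>) \<le> norm (1 + (norm (z t))^2)" for t
  proof -
    have "\<bar>z t $ j\<bar> \<le> 1 + (z t $ j)^2" by (rule abs_le_1_sq)
    also have "\<dots> \<le> 1 + (norm (z t))^2" using L2_comp_sq_le by simp
    finally show ?thesis by simp
  qed
  show ?thesis by (rule Bochner_Integration.integrable_bound[OF i2 m]) (use b in simp)
qed

theorem mainTheorem14:
  fixes f :: "real^'ny \<Rightarrow> real^'ny \<Rightarrow> real^'nz \<Rightarrow> real \<Rightarrow> real"
    and c :: "real^'ny \<Rightarrow> real^'ny \<Rightarrow> real^'nz \<Rightarrow> real \<Rightarrow> real^'nc"
    and b :: "real^'ny^'m \<Rightarrow> real^'nb"
    and ts :: "'m \<Rightarrow> real"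
    and t0 tE \<omega> \<tau> LF Lr Lf Lc cmax :: real
    and ystar :: "real \<Rightarrow> real^'ny" and zstar :: "real \<Rightarrow> real^'nz"
  assumes interval: "t0 < tE"
    and ts_in: "\<forall>k. ts k \<in> {t0..tE}"
    and omega: "0 < \<omega>" "\<omega> < 1"
    and tau: "0 < \<tau>" "\<tau> \<le> \<omega>"
    \<comment> \<open>(A.2)\<close>
    and c_bound: "\<forall>a v w t. t \<in> Om t0 tE \<longrightarrow> (\<forall>j. 0 \<le> w $ j) \<longrightarrow> norm1 (c a v w t) \<le> cmax"
    and b_bound: "\<exists>B. \<forall>p. norm1 (b p) \<le> B"
    and F_below: "\<exists>m. \<forall>y z. (y, z) \<in> Xspace t0 tE \<longrightarrow> znonneg t0 tE z \<longrightarrow> m \<le> Fobj f t0 tE y z"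
    \<comment> \<open>(A.3)\<close>
    and f_lip: "\<forall>t. Lf-lipschitz_on UNIV (\<lambda>(a, v, w). f a v w t)"
    and c_lip: "\<forall>t. Lc-lipschitz_on UNIV (\<lambda>(a, v, w). c a v w t)"
    and b_lip: "\<exists>Lb. Lb-lipschitz_on UNIV b"
    \<comment> \<open>L_F, L_r bound the Lipschitz constants of F, r\<close>
    and LF_ge: "2 \<le> LF" and Lr_ge: "2 \<le> Lr"
    and F_lipX: "\<forall>y1 z1 y2 z2. (y1, z1) \<in> Xspace t0 tE \<longrightarrow> (y2, z2) \<in> Xspace t0 tE \<longrightarrow>
        znonneg t0 tE z1 \<longrightarrow> znonneg t0 tE z2 \<longrightarrow>
        \<bar>Fobj f t0 tE y1 z1 - Fobj f t0 tE y2 z2\<bar>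
          \<le> LF * Xnorm t0 tE (\<lambda>t. y1 t - y2 t) (\<lambda>t. z1 t - z2 t)"
    and F_lipL1: "\<forall>y z1 z2. (y, z1) \<in> Xspace t0 tE \<longrightarrow> (y, z2) \<in> Xspace t0 tE \<longrightarrow>
        znonneg t0 tE z1 \<longrightarrow> znonneg t0 tE z2 \<longrightarrow>
        \<bar>Fobj f t0 tE y z1 - Fobj f t0 tE y z2\<bar> \<le> LF * L1norm t0 tE (\<lambda>t. z1 t - z2 t)"
    and r_lipX: "\<forall>y1 z1 y2 z2. (y1, z1) \<in> Xspace t0 tE \<longrightarrow> (y2, z2) \<in> Xspace t0 tE \<longrightarrow>
        znonneg t0 tE z1 \<longrightarrow> znonneg t0 tE z2 \<longrightarrow>
        \<bar>robj c b ts t0 tE y1 z1 - robj c b ts t0 tE y2 z2\<bar>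
          \<le> Lr * Xnorm t0 tE (\<lambda>t. y1 t - y2 t) (\<lambda>t. z1 t - z2 t)"
    and r_lipL1: "\<forall>y z1 z2. (y, z1) \<in> Xspace t0 tE \<longrightarrow> (y, z2) \<in> Xspace t0 tE \<longrightarrow>
        znonneg t0 tE z1 \<longrightarrow> znonneg t0 tE z2 \<longrightarrow>
        \<bar>robj c b ts t0 tE y z1 - robj c b ts t0 tE y z2\<bar> \<le> Lr * L1norm t0 tE (\<lambda>t. z1 t - z2 t)"
    \<comment> \<open>x* is a minimizer of F_{omega,tau} over X\<close>
    and xstar_in: "(ystar, zstar) \<in> Xspace t0 tE"
    and xstar_min: "\<forall>y z. (y, z) \<in> Xspace t0 tE \<longrightarrow>
        Fwt f c b ts t0 tE \<omega> \<tau> ystar zstar \<le> Fwt f c b ts t0 tE \<omega> \<tau> y z"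
  shows "AE t in lebesgue_on (Om t0 tE).
           \<forall>j. zstar t $ j \<ge> \<tau> / max (LF + Lr / (2 * \<omega>)) (Lf + Lc / (2 * \<omega>) * cmax)"
proof -
  let ?M = "lebesgue_on (Om t0 tE)"
  interpret finite_measure ?M by (rule fin_M)
  define L where "L = LF + Lr / (2 * \<omega>)"
  define d where "d = \<tau> / L"
  have Lpos: "0 < L" unfolding L_def using LF_ge Lr_ge omega by (simp add: add_pos_nonneg)
  have dpos: "0 < d" unfolding d_def using Lpos tau by simp
  have zL2: "L2fun t0 tE zstar" and yH1: "H1fun t0 tE ystar"
    using xstar_in by (auto simp: Xspace_def)
  have zm: "(\<lambda>t. zstar t $ j) \<in> borel_measurable ?M" for j by (rule L2_comp_meas[OF zL2])
  define one where "one = (\<lambda>t::real. (1::real^'nz))"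
  have L2one: "L2fun t0 tE one" unfolding L2fun_def one_def by simp
  have G1: "Gamma t0 tE one = 0"
    unfolding Gamma_def one_def by (simp add: neglog_def poslog_def)
  have "Fwt f c b ts t0 tE \<omega> \<tau> ystar zstar \<le> Fwt f c b ts t0 tE \<omega> \<tau> ystar one"
    using xstar_min L2one yH1 by (auto simp: Xspace_def)
  also have "\<dots> < \<infinity>" unfolding Fwt_def G1 by simp
  finally have Fin: "Fwt f c b ts t0 tE \<omega> \<tau> ystar zstar \<noteq> \<infinity>" by simp
  have Gfin: "Gamma t0 tE zstar \<noteq> \<infinity>"
  proof
    assume "Gamma t0 tE zstar = \<infinity>"
    then have "Fwt f c b ts t0 tE \<omega> \<tau> ystar zstar = \<infinity>" using tau unfolding Fwt_def by simp
    with Fin show False by simp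
  qed
  have Nfin: "(\<integral>\<^sup>+t. neglog (zstar t $ j) \<partial>?M) \<noteq> \<infinity>" for j
  proof
    assume "(\<integral>\<^sup>+t. neglog (zstar t $ j) \<partial>?M) = \<infinity>"
    then have "Gamma t0 tE zstar = \<infinity>"
      unfolding Gamma_def sum_Pinfty by (intro conjI bexI[of _ j]) auto
    with Gfin show False by simp
  qed
  have pos: "AE t in ?M. 0 < zstar t $ j" and intl: "integrable ?M (\<lambda>t. ln (zstar t $ j))" for j
    using gamma_comp_fin[OF zm Nfin poslog_fin[OF zL2]] by auto
  have Gz: "Gamma t0 tE zstar = ereal (- (\<Sum>j\<in>UNIV. \<integral>t. ln (zstar t $ j) \<partial>?M))"
    unfolding Gamma_def by (simp add: gamma_comp_eq[OF pos intl] sum_negf)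
  define z' where "z' = (\<lambda>t. \<chi> j. max (zstar t $ j) d)"
  have L2z': "L2fun t0 tE z'" unfolding z'_def by (rule L2_floor[OF zL2]) (use dpos in simp)
  have z'ge: "d \<le> z' t $ j" for t j unfolding z'_def by simp
  have intl': "integrable ?M (\<lambda>t. ln (z' t $ j))" for j
  proof -
    have i2: "integrable ?M (\<lambda>t. \<bar>ln d\<bar> + d + \<bar>zstar t $ j\<bar>)"
      using L2_abs_int[OF zL2, of j] by simp
    have m: "(\<lambda>t. ln (z' t $ j)) \<in> borel_measurable ?M"
      unfolding z'_def using zm[of j] by simp
    have b: "norm (ln (z' t $ j)) \<le> norm (\<bar>ln d\<bar> + d + \<bar>zstar t $ j\<bar>)" for t
    proof -
      have x: "z' t $ j = max (zstar t $ j) d" unfolding z'_def by simp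
      have "ln d \<le> ln (z' t $ j)" using z'ge[of t j] dpos by simp
      moreover have "ln (z' t $ j) \<le> z' t $ j" using z'ge[of t j] dpos by (intro ln_bound) simp
      moreover have "z' t $ j \<le> d + \<bar>zstar t $ j\<bar>" unfolding x using dpos by (simp add: max_def)
      ultimately show ?thesis using dpos unfolding real_norm_def by (smt (verit))
    qed
    show ?thesis by (rule Bochner_Integration.integrable_bound[OF i2 m]) (use b in simp)
  qed
  have pos': "AE t in ?M. 0 < z' t $ j" for j using z'ge dpos by (auto intro: less_le_trans)
  have Gz': "Gamma t0 tE z' = ereal (- (\<Sum>j\<in>UNIV. \<integral>t. ln (z' t $ j) \<partial>?M))"
    unfolding Gamma_def by (simp add: gamma_comp_eq[OF pos' intl'] sum_negf)
  have zn: "znonneg t0 tE zstar" unfolding znonneg_def AE_all_countable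
    apply (intro allI) subgoal for j using pos[of j] by eventually_elim simp done
  have zn': "znonneg t0 tE z'" unfolding znonneg_def 
  proof (rule AE_I2, intro allI)
    fix t j show "0 \<le> z' t $ j" using z'ge[of t j] dpos by linarith
  qed
  have x'in: "(ystar, z') \<in> Xspace t0 tE" using yH1 L2z' by (simp add: Xspace_def)
  define p where "p j t = max 0 (d - zstar t $ j)" for j t
  have intp: "integrable ?M (p j)" for j
  proof -
    have i2: "integrable ?M (\<lambda>t. d + \<bar>zstar t $ j\<bar>)"
      using L2_abs_int[OF zL2, of j] by simp
    have m: "p j \<in> borel_measurable ?M"
      unfolding p_def using zm[of j] by simp
    show ?thesis by (rule Bochner_Integration.integrable_bound[OF i2 m]) (use dpos in \<open>auto simp: p_def\<close>)
  qed
  define D where "D = L1norm t0 tE (\<lambda>t. zstar t - z' t)"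
  have D_eq: "D = (\<Sum>j\<in>UNIV. \<integral>t. p j t \<partial>?M)"
  proof -
    have "D = (\<integral>t. (\<Sum>j\<in>UNIV. p j t) \<partial>?M)"
      unfolding D_def L1norm_def norm1_def
      by (rule Bochner_Integration.integral_cong, simp, rule sum.cong) (auto simp: z'_def p_def max_def)
    also have "\<dots> = (\<Sum>j\<in>UNIV. \<integral>t. p j t \<partial>?M)"
      using Bochner_Integration.integral_sum[where M="?M" and I=UNIV and f=p] intp by simp
    finally show ?thesis .
  qed
  define F1 where "F1 = Fobj f t0 tE ystar zstar"
  define F2 where "F2 = Fobj f t0 tE ystar z'"
  define R1 where "R1 = robj c b ts t0 tE ystar zstar"
  define R2 where "R2 = robj c b ts t0 tE ystar z'"
  define S1 where "S1 = (\<Sum>j\<in>UNIV. \<integral>t. ln (zstar t $ j) \<partial>?M)"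
  define S2 where "S2 = (\<Sum>j\<in>UNIV. \<integral>t. ln (z' t $ j) \<partial>?M)"
  have "Fwt f c b ts t0 tE \<omega> \<tau> ystar zstar \<le> Fwt f c b ts t0 tE \<omega> \<tau> ystar z'"
    using xstar_min x'in by auto
  then have ineq: "F1 + R1 / (2 * \<omega>) + \<tau> * (- S1) \<le> F2 + R2 / (2 * \<omega>) + \<tau> * (- S2)"
    unfolding Fwt_def Gz Gz' F1_def F2_def R1_def R2_def S1_def S2_def by simp
  have hF: "\<bar>F1 - F2\<bar> \<le> LF * D"
    unfolding F1_def F2_def D_def using F_lipL1 xstar_in x'in zn zn' by blast
  have hR: "\<bar>R1 - R2\<bar> \<le> Lr * D"
    unfolding R1_def R2_def D_def using r_lipL1 xstar_in x'in zn zn' by blast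
  have hR2: "(R2 - R1) / (2 * \<omega>) \<le> Lr * D / (2 * \<omega>)"
    using hR omega by (intro divide_right_mono) auto
  have "\<tau> * (S2 - S1) \<le> L * D"
    using ineq hF hR2 unfolding L_def by (simp add: algebra_simps add_divide_distrib diff_divide_distrib)
  then have SD: "S2 - S1 \<le> D / d"
    using tau Lpos unfolding d_def by (simp add: field_simps)
  define e where "e j t = ln (max (zstar t $ j) d) - ln (zstar t $ j) - p j t / d" for j t
  have inte: "integrable ?M (e j)" for j
  proof -
    have "integrable ?M (\<lambda>t. ln (z' t $ j) - ln (zstar t $ j) - p j t / d)"
      using intl' intl intp by auto
    then show ?thesis unfolding e_def z'_def by simp
  qed
  have enn: "AE t in ?M. 0 \<le> e j t" for j
    using pos[of j]
  proof eventually_elim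
    case (elim t) show ?case using e_nonneg[OF elim dpos] by (simp add: e_def p_def)
  qed
  have ie: "0 \<le> (\<integral>t. e j t \<partial>?M)" for j by (rule integral_nonneg_AE[OF enn])
  have "(\<Sum>j\<in>UNIV. \<integral>t. e j t \<partial>?M) = S2 - S1 - D / d"
  proof -
    have "(\<integral>t. e j t \<partial>?M) = (\<integral>t. ln (z' t $ j) \<partial>?M) - (\<integral>t. ln (zstar t $ j) \<partial>?M) - (\<integral>t. p j t \<partial>?M) / d" for j
    proof -
      have "(\<integral>t. e j t \<partial>?M) = (\<integral>t. ln (z' t $ j) - ln (zstar t $ j) - p j t / d \<partial>?M)"
        unfolding e_def z'_def by simp
      also have "\<dots> = (\<integral>t. ln (z' t $ j) \<partial>?M) - (\<integral>t. ln (zstar t $ j) \<partial>?M) - (\<integral>t. p j t \<partial>?M) / d"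
        using intl' intl intp by simp
      finally show ?thesis .
    qed
    then show ?thesis unfolding S1_def S2_def D_eq
      by (simp add: sum_subtractf sum_divide_distrib)
  qed
  with SD have "(\<Sum>j\<in>UNIV. \<integral>t. e j t \<partial>?M) \<le> 0" by simp
  then have "(\<Sum>j\<in>UNIV. \<integral>t. e j t \<partial>?M) = 0" using ie by (meson antisym sum_nonneg)
  then have ie0: "(\<integral>t. e j t \<partial>?M) = 0" for j
    using sum_nonneg_eq_0_iff[of UNIV "\<lambda>j. \<integral>t. e j t \<partial>?M"] ie by simp
  have AEd: "AE t in ?M. d \<le> zstar t $ j" for j
  proof -
    have "AE t in ?M. e j t = 0" using integral_nonneg_eq_0_iff_AE[OF inte enn] ie0 by simp
    with pos[of j] show ?thesis
    proof eventually_elim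
      case (elim t)
      have "ln (max (zstar t $ j) d) - ln (zstar t $ j) - max 0 (d - zstar t $ j) / d = 0"
        using elim(2) unfolding e_def p_def .
      from e_zero[OF elim(1) dpos this] show ?case .
    qed
  qed
  have fin: "\<tau> / max (LF + Lr / (2 * \<omega>)) (Lf + Lc / (2 * \<omega>) * cmax) \<le> d"
  proof -
    have "L \<le> max (LF + Lr / (2 * \<omega>)) (Lf + Lc / (2 * \<omega>) * cmax)" unfolding L_def by (rule max.cobounded1)
    moreover have "0 < max (LF + Lr / (2 * \<omega>)) (Lf + Lc / (2 * \<omega>) * cmax) * L"
      using calculation Lpos by (intro mult_pos_pos) linarith+
    ultimately show ?thesis unfolding d_def using tau by (intro divide_left_mono) auto
  qed
  show ?thesis unfolding AE_all_countable
    apply (intro allI) subgoal for j using AEd[of j] by eventually_elim (use fin in linarith) done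
qed

end
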